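(* Let $G$ be a connected weighted multigraph on the vertex set $V$, $|V|=n\ge2$, with positive edge weights, weighted adjacency matrix $A$, spectral radius $\rho$ and Perron vector $p$; let $P=\operatorname{diag}p$. For $j\in V$ let $A_{\tilde j\tilde j}$ be the $n\times n$ matrix obtained from $A$ by replacing all entries of row $j$ and column $j$ by zero. Then for all distinct $i,j\in V$, $$d^{LW}(i,j)=\frac{\|p\|_2^2}{n}\Bigl[\bigl((\rho I-A_{\tilde j\tilde j})P\bigr)^{-1}_i+\bigl((\rho I-A_{\tilde i\tilde i})P\bigr)^{-1}_j\Bigr]\mathbf 1,$$ where $N^{-1}_i$ denotes the row of $N^{-1}$ indexed by $i$ and $\mathbf 1$ is the vector of $n$ ones.
   Context: Loops and multiple edges are allowed; $A=(a_{ij})$ has $a_{ij}$ equal to the sum of weights of the edges joining $i$ and $j$. The Perron vector $p$ is the positive eigenvector of $A$ for $\rho$ with entries summing to 1. The long walk distance is $d^{LW}(i,j)=\lim_{\alpha\to\infty}\theta\bigl(\tfrac12(\ln r_{ii}+\ln r_{jj})-\ln r_{ij}\bigr)$, where $(r_{ij})=(I-tA)^{-1}$, $t=(\rho+\alpha^{-1})^{-1}$, $\theta=\ln(e+\alpha^{2/n})\frac{\alpha-1}{\ln\alpha}$. *)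

theory Defs
  imports "HOL-Analysis.Analysis"
begin

text \<open>Spectral radius of a real square matrix, taken over its real eigenvalues.
  For the symmetric matrices considered here all eigenvalues are real, so this is
  the usual spectral radius.\<close>
definition spec_radius :: "real^'n^'n \<Rightarrow> real" where
  "spec_radius A = Max {\<bar>c\<bar> | c. \<exists>v. v \<noteq> 0 \<and> A *v v = c *\<^sub>R v}"

definition adj_connected :: "real^'n^'n \<Rightarrow> bool" where
  "adj_connected A \<longleftrightarrow> (\<forall>i j. (i, j) \<in> {(a, b). A $ a $ b \<noteq> 0}\<^sup>*)"

definition diag_mat :: "real^'n \<Rightarrow> real^'n^'n" where
  "diag_mat p = (\<chi> a b. if a = b then p $ a else 0)"

definition del_rc :: "real^'n^'n \<Rightarrow> 'n \<Rightarrow> real^'n^'n" where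
  "del_rc A j = (\<chi> a b. if a = j \<or> b = j then 0 else A $ a $ b)"

definition lw_resolvent :: "real^'n^'n \<Rightarrow> real \<Rightarrow> real^'n^'n" where
  "lw_resolvent A \<alpha> = matrix_inv (mat 1 - inverse (spec_radius A + inverse \<alpha>) *\<^sub>R A)"

definition lw_theta :: "nat \<Rightarrow> real \<Rightarrow> real" where
  "lw_theta n \<alpha> = ln (exp 1 + \<alpha> powr (2 / real n)) * (\<alpha> - 1) / ln \<alpha>"

text \<open>The expression whose limit as alpha tends to infinity is the long walk distance.\<close>
definition lw_expr :: "real^'n^'n \<Rightarrow> 'n \<Rightarrow> 'n \<Rightarrow> real \<Rightarrow> real" where
  "lw_expr A i j \<alpha> = (let r = lw_resolvent A \<alpha> in
     lw_theta CARD('n) \<alpha> *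
       ((ln (r $ i $ i) + ln (r $ j $ j)) / 2 - ln (r $ i $ j)))"

end

theory Submission imports Defs "HOL-Real_Asymp.Real_Asymp" begin

lemma matrix_inv_props:
  fixes B :: "real^'n^'n"
  assumes "invertible B"
  shows "B ** matrix_inv B = mat 1" "matrix_inv B ** B = mat 1"
proof -
  have "\<exists>C::real^'n^'n. B ** C = mat 1 \<and> C ** B = mat 1" using assms unfolding invertible_def by blast
  hence "B ** matrix_inv B = mat 1 \<and> matrix_inv B ** B = mat 1"
    unfolding matrix_inv_def by (rule someI_ex)
  thus "B ** matrix_inv B = mat 1" "matrix_inv B ** B = mat 1" by auto
qed

lemma matrix_inv_eqI:
  fixes B C :: "real^'n^'n"
  assumes "B ** C = mat 1" "C ** B = mat 1"
  shows "matrix_inv B = C"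
proof -
  have inv: "invertible B" using assms unfolding invertible_def by blast
  have "matrix_inv B = matrix_inv B ** (B ** C)" using assms by simp
  also have "\<dots> = (matrix_inv B ** B) ** C" by (simp add: matrix_mul_assoc)
  also have "\<dots> = C" using matrix_inv_props[OF inv] by simp
  finally show ?thesis .
qed

lemma invertible_ker:
  fixes B :: "real^'n^'n"
  assumes "\<And>x. B *v x = 0 \<Longrightarrow> x = 0"
  shows "invertible B"
  using assms matrix_left_invertible_ker invertible_left_inverse by blast

lemma log_expansion:
  fixes Q :: "real \<Rightarrow> real"
  assumes c: "c > 0" and b: "\<And>e. e > 0 \<Longrightarrow> \<bar>Q e - c - e * K\<bar> \<le> C * e\<^sup>2"
  shows "((\<lambda>e. (ln (Q e) - ln c) / e) \<longlongrightarrow> K / c) (at_right 0)"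
    and "eventually (\<lambda>e. Q e > 0) (at_right 0)"
proof -
  have C0: "C \<ge> 0"
  proof -
    have "\<bar>Q 1 - c - 1 * K\<bar> \<le> C * 1\<^sup>2" by (rule b) simp
    moreover have "0 \<le> \<bar>Q 1 - c - 1 * K\<bar>" by simp
    ultimately show ?thesis by simp
  qed
  define B where "B = (\<bar>K\<bar> + C) / c"
  have B0: "B \<ge> 0" using C0 c by (simp add: B_def)
  define d where "d = min 1 (1 / (2 * B + 2))"
  have d0: "d > 0" using B0 by (simp add: d_def)
  have key: "Q e > 0 \<and> \<bar>(ln (Q e) - ln c) / e - K / c\<bar> \<le> (2 * B\<^sup>2 + C / c) * e"
    if e: "0 < e" "e < d" for e
  proof -
    define g where "g = (Q e - c) / c"
    have Qg: "Q e = c * (1 + g)" using c by (simp add: g_def field_simps)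
    have e1: "e \<le> 1" using e by (simp add: d_def)
    have "e * e \<le> 1 * e" using e e1 by (intro mult_right_mono) auto
    hence "e\<^sup>2 \<le> e" by (simp add: power2_eq_square)
    hence Ce: "C * e\<^sup>2 \<le> C * e" using C0 by (rule mult_left_mono)
    have "\<bar>Q e - c\<bar> \<le> \<bar>Q e - c - e * K\<bar> + \<bar>e * K\<bar>"
      using abs_triangle_ineq[of "Q e - c - e * K" "e * K"] by simp
    also have "\<bar>e * K\<bar> = e * \<bar>K\<bar>" using e by (simp add: abs_mult)
    finally have "\<bar>Q e - c\<bar> \<le> C * e + e * \<bar>K\<bar>" using b[OF e(1)] Ce by linarith
    hence Qc: "\<bar>Q e - c\<bar> \<le> e * (\<bar>K\<bar> + C)" by (simp add: algebra_simps)
    have "\<bar>g\<bar> = \<bar>Q e - c\<bar> / c" using c by (simp add: g_def abs_div)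
    also have "\<dots> \<le> e * (\<bar>K\<bar> + C) / c" using Qc c by (intro divide_right_mono) auto
    also have "\<dots> = e * B" by (simp add: B_def)
    finally have gb: "\<bar>g\<bar> \<le> e * B" .
    have "e < 1 / (2 * B + 2)" using e by (simp add: d_def)
    hence "e * (2 * B + 2) < 1" using B0 by (simp add: pos_less_divide_eq)
    hence "2 * (e * B) + 2 * e < 1" by (simp add: algebra_simps)
    hence eB: "e * B \<le> 1/2" using e by linarith
    hence g2: "\<bar>g\<bar> \<le> 1/2" using gb by linarith
    hence g1: "1 + g > 0" by linarith
    have Qpos: "Q e > 0" using Qg c g1 by simp
    have lnq: "ln (Q e) - ln c = ln (1 + g)" using Qg c g1 by (simp add: ln_mult)
    have l1: "\<bar>ln (1 + g) - g\<bar> \<le> 2 * g\<^sup>2" by (rule abs_ln_one_plus_x_minus_x_bound[OF g2])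
    have "g\<^sup>2 \<le> (e * B)\<^sup>2" using gb by (metis abs_ge_zero power2_abs power_mono)
    hence "\<bar>ln (1 + g) - g\<bar> \<le> 2 * (e * B)\<^sup>2" using l1 by linarith
    hence "\<bar>ln (1 + g) - g\<bar> / e \<le> 2 * (e * B)\<^sup>2 / e" using e by (intro divide_right_mono) auto
    also have "2 * (e * B)\<^sup>2 / e = 2 * B\<^sup>2 * e" using e by (simp add: power2_eq_square)
    finally have l2: "\<bar>ln (1 + g) - g\<bar> / e \<le> 2 * B\<^sup>2 * e" .
    have "g / e - K / c = (Q e - c - e * K) / (c * e)" using c e by (simp add: g_def field_simps)
    hence "\<bar>g / e - K / c\<bar> = \<bar>Q e - c - e * K\<bar> / (c * e)" using c e by (simp add: abs_div)
    also have "\<dots> \<le> C * e\<^sup>2 / (c * e)" using b[OF e(1)] c e by (intro divide_right_mono) auto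
    also have "C * e\<^sup>2 / (c * e) = C / c * e" using c e by (simp add: power2_eq_square)
    finally have l3: "\<bar>g / e - K / c\<bar> \<le> C / c * e" .
    have eqd: "(ln (Q e) - ln c) / e - K / c = (ln (1 + g) - g) / e + (g / e - K / c)"
      using e by (simp add: lnq diff_divide_distrib)
    have "\<bar>(ln (Q e) - ln c) / e - K / c\<bar> \<le> \<bar>(ln (1 + g) - g) / e\<bar> + \<bar>g / e - K / c\<bar>"
      unfolding eqd by (rule abs_triangle_ineq)
    also have "\<bar>(ln (1 + g) - g) / e\<bar> = \<bar>ln (1 + g) - g\<bar> / e" using e by (simp add: abs_div)
    finally have "\<bar>(ln (Q e) - ln c) / e - K / c\<bar> \<le> 2 * B\<^sup>2 * e + C / c * e" using l2 l3 by linarith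
    thus ?thesis using Qpos by (simp add: distrib_right)
  qed
  have ev: "eventually (\<lambda>e. 0 < e \<and> e < d) (at_right 0)"
    using eventually_at_right_real[OF d0] by (rule eventually_mono) auto
  show "eventually (\<lambda>e. Q e > 0) (at_right 0)"
    using ev by (rule eventually_mono) (use key in blast)
  have lim0: "((\<lambda>e. (2 * B\<^sup>2 + C / c) * e) \<longlongrightarrow> 0) (at_right 0)"
    using tendsto_mult[OF tendsto_const tendsto_ident_at, of "2 * B\<^sup>2 + C / c" 0 "{0<..}"] by simp
  have "((\<lambda>e. (ln (Q e) - ln c) / e - K / c) \<longlongrightarrow> 0) (at_right 0)"
    by (rule Lim_null_comparison[OF _ lim0]) (use ev key in \<open>auto elim!: eventually_mono\<close>)
  thus "((\<lambda>e. (ln (Q e) - ln c) / e) \<longlongrightarrow> K / c) (at_right 0)" by (rule LIM_zero_cancel)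
qed

lemma theta_lim:
  assumes "n > 0"
  shows "((\<lambda>a. lw_theta n a / a) \<longlongrightarrow> 2 / real n) at_top"
proof -
  have q: "2 / real n > 0" using assms by simp
  have "((\<lambda>a. ln (exp 1 + a powr (2 / real n)) / ln a * ((a - 1) / a)) \<longlongrightarrow> 2 / real n * 1) at_top"
    using q by real_asymp
  moreover have "eventually (\<lambda>a. ln (exp 1 + a powr (2 / real n)) / ln a * ((a - 1) / a) = lw_theta n a / a) at_top"
    by (simp add: lw_theta_def)
  ultimately show ?thesis by (simp add: tendsto_cong)
qed

locale lw =
  fixes A :: "real^'n^'n" and p :: "real^'n" and \<rho> :: real
  assumes sym: "\<And>a b. A $ a $ b = A $ b $ a"
    and nonneg: "\<And>a b. A $ a $ b \<ge> 0"
    and conn: "adj_connected A"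
    and p_pos: "\<And>a. p $ a > 0"
    and p_eig: "A *v p = \<rho> *\<^sub>R p"
begin

definition M :: "real^'n^'n" where "M = \<rho> *\<^sub>R mat 1 - A"

lemma Av: "(A *v x) $ a = (\<Sum>b\<in>UNIV. A $ a $ b * x $ b)"
  by (simp add: matrix_vector_mult_def)

lemma Mv: "(M *v x) $ a = \<rho> * x $ a - (\<Sum>b\<in>UNIV. A $ a $ b * x $ b)"
  by (simp add: M_def matrix_vector_mult_diff_rdistrib Av flip: matrix_scaleR_vector_ac)

lemma Ap: "(\<Sum>b\<in>UNIV. A $ a $ b * p $ b) = \<rho> * p $ a"
  using arg_cong[OF p_eig, of "\<lambda>v. v $ a"] by (simp add: Av)

lemma pA: "(\<Sum>a\<in>UNIV. p $ a * A $ a $ b) = \<rho> * p $ b"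
  using Ap[of b] by (simp add: sym mult.commute)

lemma Mp: "M *v p = 0"
  by (simp add: vec_eq_iff Mv Ap)

lemma M_sym: "inner (M *v x) y = inner x (M *v y)"
proof -
  have "inner (M *v x) y = (\<Sum>a\<in>UNIV. (\<rho> * x $ a - (\<Sum>b\<in>UNIV. A $ a $ b * x $ b)) * y $ a)"
    by (simp add: inner_vec_def Mv)
  also have "\<dots> = (\<Sum>a\<in>UNIV. \<rho> * x $ a * y $ a) - (\<Sum>a\<in>UNIV. \<Sum>b\<in>UNIV. A $ a $ b * x $ b * y $ a)"
    by (simp add: left_diff_distrib sum_subtractf sum_distrib_right)
  also have "(\<Sum>a\<in>UNIV. \<Sum>b\<in>UNIV. A $ a $ b * x $ b * y $ a) = (\<Sum>b\<in>UNIV. \<Sum>a\<in>UNIV. A $ b $ a * y $ a * x $ b)"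
    by (subst sum.swap) (simp add: sym mult_ac)
  also have "(\<Sum>a\<in>UNIV. \<rho> * x $ a * y $ a) - (\<Sum>b\<in>UNIV. \<Sum>a\<in>UNIV. A $ b $ a * y $ a * x $ b)
     = (\<Sum>b\<in>UNIV. x $ b * (\<rho> * y $ b - (\<Sum>a\<in>UNIV. A $ b $ a * y $ a)))"
    by (simp add: right_diff_distrib sum_subtractf sum_distrib_left sum_distrib_right mult_ac)
  also have "\<dots> = inner x (M *v y)" by (simp add: inner_vec_def Mv)
  finally show ?thesis .
qed

lemma p_M: "inner p (M *v x) = 0"
  by (simp add: M_sym[symmetric] Mp)

lemma quad: "2 * inner x (M *v x) =
  (\<Sum>a\<in>UNIV. \<Sum>b\<in>UNIV. A $ a $ b * p $ a * p $ b * (x $ a / p $ a - x $ b / p $ b)\<^sup>2)"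
proof -
  have e: "A $ a $ b * p $ a * p $ b * (x $ a / p $ a - x $ b / p $ b)\<^sup>2 =
     A $ a $ b * p $ b * (x $ a ^ 2 / p $ a) + A $ a $ b * p $ a * (x $ b ^ 2 / p $ b)
      - 2 * (A $ a $ b * x $ b * x $ a)" for a b
    using p_pos[of a] p_pos[of b] by (simp add: field_simps power2_eq_square)
  have s1: "(\<Sum>a\<in>UNIV. \<Sum>b\<in>UNIV. A $ a $ b * p $ b * (x $ a ^ 2 / p $ a)) = (\<Sum>a\<in>UNIV. \<rho> * x $ a ^ 2)"
  proof (rule sum.cong[OF refl])
    fix a
    have "(\<Sum>b\<in>UNIV. A $ a $ b * p $ b * (x $ a ^ 2 / p $ a)) = (x $ a ^ 2 / p $ a) * (\<Sum>b\<in>UNIV. A $ a $ b * p $ b)"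
      by (simp add: sum_distrib_left mult_ac)
    also have "\<dots> = \<rho> * x $ a ^ 2" using p_pos[of a] by (simp add: Ap)
    finally show "(\<Sum>b\<in>UNIV. A $ a $ b * p $ b * (x $ a ^ 2 / p $ a)) = \<rho> * x $ a ^ 2" .
  qed
  have s2: "(\<Sum>a\<in>UNIV. \<Sum>b\<in>UNIV. A $ a $ b * p $ a * (x $ b ^ 2 / p $ b)) = (\<Sum>b\<in>UNIV. \<rho> * x $ b ^ 2)"
  proof -
    have "(\<Sum>a\<in>UNIV. \<Sum>b\<in>UNIV. A $ a $ b * p $ a * (x $ b ^ 2 / p $ b))
       = (\<Sum>b\<in>UNIV. (x $ b ^ 2 / p $ b) * (\<Sum>a\<in>UNIV. p $ a * A $ a $ b))"
      by (subst sum.swap) (simp add: sum_distrib_left mult_ac)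
    also have "\<dots> = (\<Sum>b\<in>UNIV. \<rho> * x $ b ^ 2)"
    proof (rule sum.cong[OF refl])
      fix b show "(x $ b ^ 2 / p $ b) * (\<Sum>a\<in>UNIV. p $ a * A $ a $ b) = \<rho> * x $ b ^ 2"
        using p_pos[of b] by (simp add: pA)
    qed
    finally show ?thesis .
  qed
  have "(\<Sum>a\<in>UNIV. \<Sum>b\<in>UNIV. A $ a $ b * p $ a * p $ b * (x $ a / p $ a - x $ b / p $ b)\<^sup>2)
    = (\<Sum>a\<in>UNIV. \<Sum>b\<in>UNIV. A $ a $ b * p $ b * (x $ a ^ 2 / p $ a))
      + (\<Sum>a\<in>UNIV. \<Sum>b\<in>UNIV. A $ a $ b * p $ a * (x $ b ^ 2 / p $ b))
      - 2 * (\<Sum>a\<in>UNIV. \<Sum>b\<in>UNIV. A $ a $ b * x $ b * x $ a)"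
    by (simp add: e sum.distrib sum_subtractf sum_distrib_left)
  also have "\<dots> = 2 * inner x (M *v x)"
    unfolding s1 s2
    by (simp add: inner_vec_def Mv right_diff_distrib sum_subtractf sum_distrib_left
        sum_distrib_right mult_ac power2_eq_square)
  finally show ?thesis by simp
qed

lemma psd: "inner x (M *v x) \<ge> 0"
proof -
  have "0 \<le> (\<Sum>a\<in>UNIV. \<Sum>b\<in>UNIV. A $ a $ b * p $ a * p $ b * (x $ a / p $ a - x $ b / p $ b)\<^sup>2)"
    by (intro sum_nonneg mult_nonneg_nonneg) (auto simp: nonneg less_imp_le[OF p_pos])
  thus ?thesis using quad[of x] by simp
qed

lemma ker:
  assumes "M *v x = 0"
  shows "x = (x $ k / p $ k) *\<^sub>R p"
proof -
  define t where "t = (\<lambda>a b. A $ a $ b * p $ a * p $ b * (x $ a / p $ a - x $ b / p $ b)\<^sup>2)"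
  have tnn: "0 \<le> t a b" for a b
    unfolding t_def by (intro mult_nonneg_nonneg) (auto simp: nonneg less_imp_le[OF p_pos])
  have rnn: "0 \<le> (\<Sum>b\<in>UNIV. t a b)" for a by (rule sum_nonneg) (rule tnn)
  have tsum: "(\<Sum>a\<in>UNIV. \<Sum>b\<in>UNIV. t a b) = 0" using quad[of x] assms unfolding t_def by simp
  have row0: "(\<Sum>b\<in>UNIV. t a b) = 0" for a
    using sum_nonneg_eq_0_iff[OF finite_class.finite_UNIV, of "\<lambda>a. \<Sum>b\<in>UNIV. t a b"] rnn tsum by blast
  have t0: "t a b = 0" for a b
    using sum_nonneg_eq_0_iff[OF finite_class.finite_UNIV, of "t a"] tnn row0 by blast
  have edge: "x $ a / p $ a = x $ b / p $ b" if "A $ a $ b \<noteq> 0" for a b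
  proof -
    have "A $ a $ b * p $ a * p $ b \<noteq> 0" using that p_pos[of a] p_pos[of b] by simp
    hence "(x $ a / p $ a - x $ b / p $ b)\<^sup>2 = 0" using t0[of a b] unfolding t_def by simp
    thus ?thesis by simp
  qed
  have path: "x $ a / p $ a = x $ b / p $ b" if "(a, b) \<in> {(a, b). A $ a $ b \<noteq> 0}\<^sup>*" for a b
    using that
  proof (induction rule: rtrancl_induct)
    case base thus ?case by simp
  next
    case (step y z) thus ?case using edge[of y z] by simp
  qed
  define c where "c = x $ k / p $ k"
  have xa: "x $ a = c * p $ a" for a
  proof -
    have "x $ a / p $ a = c" using path[of a k] conn unfolding adj_connected_def c_def by blast
    thus ?thesis using p_pos[of a] by (simp add: divide_eq_eq)
  qed
  have "x = c *\<^sub>R p" unfolding vec_eq_iff by (simp add: xa)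
  thus ?thesis by (simp add: c_def)
qed

lemma rho_pos:
  assumes "i \<noteq> (j::'n)"
  shows "\<rho> > 0"
proof -
  have "(i, j) \<in> {(a, b). A $ a $ b \<noteq> 0}\<^sup>*" using conn unfolding adj_connected_def by blast
  then obtain y where "A $ i $ y \<noteq> 0" using assms by (cases rule: converse_rtranclE) auto
  hence Ay: "A $ i $ y > 0" using nonneg[of i y] by simp
  have "A $ i $ y * p $ y \<le> (\<Sum>b\<in>UNIV. A $ i $ b * p $ b)"
    by (rule member_le_sum) (auto simp: nonneg less_imp_le[OF p_pos])
  moreover have "A $ i $ y * p $ y > 0" using Ay p_pos[of y] by simp
  ultimately have "\<rho> * p $ i > 0" using Ap[of i] by simp
  thus ?thesis using p_pos[of i] by (simp add: zero_less_mult_iff)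
qed

lemma eq_off:
  assumes "\<And>a. a \<noteq> k \<Longrightarrow> u $ a = w $ a" and "inner p u = inner p w"
  shows "u = w"
proof -
  have r: "(\<Sum>a\<in>UNIV - {k}. p $ a * u $ a) = (\<Sum>a\<in>UNIV - {k}. p $ a * w $ a)"
    by (rule sum.cong) (auto simp: assms(1))
  have "inner p u = p $ k * u $ k + (\<Sum>a\<in>UNIV - {k}. p $ a * u $ a)"
    unfolding inner_vec_def by (simp add: sum.remove[of UNIV k])
  moreover have "inner p w = p $ k * w $ k + (\<Sum>a\<in>UNIV - {k}. p $ a * w $ a)"
    unfolding inner_vec_def by (simp add: sum.remove[of UNIV k])
  ultimately have "p $ k * u $ k = p $ k * w $ k" using assms(2) r by linarith
  hence "u $ k = w $ k" using p_pos[of k] by simp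
  thus ?thesis using assms(1) unfolding vec_eq_iff by metis
qed

definition D :: "'n \<Rightarrow> real^'n^'n" where "D k = \<rho> *\<^sub>R mat 1 - del_rc A k"

lemma Dv: "(D k *v v) $ a = \<rho> * v $ a - (\<Sum>b\<in>UNIV. (if a = k \<or> b = k then 0 else A $ a $ b) * v $ b)"
  by (simp add: D_def del_rc_def matrix_vector_mult_diff_rdistrib flip: matrix_scaleR_vector_ac)
     (simp add: matrix_vector_mult_def)

lemma D_M:
  assumes "a \<noteq> k" "v $ k = 0"
  shows "(D k *v v) $ a = (M *v v) $ a"
proof -
  have "(\<Sum>b\<in>UNIV. (if a = k \<or> b = k then 0 else A $ a $ b) * v $ b) = (\<Sum>b\<in>UNIV. A $ a $ b * v $ b)"
    by (rule sum.cong) (use assms in auto)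
  thus ?thesis by (simp add: Dv Mv)
qed

lemma D_ker:
  assumes rp: "\<rho> > 0" and v: "D k *v v = 0"
  shows "v = 0"
proof -
  have "(D k *v v) $ k = \<rho> * v $ k" by (simp add: Dv)
  hence vk: "v $ k = 0" using v rp by simp
  have "M *v v = 0"
    by (rule eq_off[of k]) (auto simp: p_M D_M[OF _ vk, symmetric] v)
  hence "v = (v $ k / p $ k) *\<^sub>R p" by (rule ker)
  thus ?thesis using vk by simp
qed

lemma D_inv: "\<rho> > 0 \<Longrightarrow> invertible (D k)"
  by (rule invertible_ker) (rule D_ker)

lemma D_sol:
  fixes k :: 'n and g :: "real^'n"
  assumes rp: "\<rho> > 0"
  defines "v \<equiv> matrix_inv (D k) *v g"
  defines "v' \<equiv> (\<chi> a. if a = k then 0 else v $ a)"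
  shows "D k *v v = g" "v' $ k = 0" "\<And>a. a \<noteq> k \<Longrightarrow> (M *v v') $ a = g $ a"
proof -
  show Dv: "D k *v v = g"
    unfolding v_def by (simp add: matrix_vector_mul_assoc matrix_inv_props(1)[OF D_inv[OF rp]])
  show "v' $ k = 0" by (simp add: v'_def)
  fix a assume a: "a \<noteq> k"
  have "(D k *v v') $ a = (D k *v v) $ a"
    unfolding lw.Dv[OF lw_axioms] by (intro arg_cong2[where f="(-)"] sum.cong) (use a in \<open>auto simp: v'_def\<close>)
  thus "(M *v v') $ a = g $ a"
    using D_M[OF a, of v'] a Dv by (simp add: v'_def)
qed

lemma range_M:
  assumes rp: "\<rho> > 0" and h: "inner p h = 0"
  shows "\<exists>z. M *v z = h"
proof -
  define k :: 'n where "k = undefined"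
  define v' where "v' = (\<chi> a. if a = k then 0 else (matrix_inv (D k) *v h) $ a)"
  have "M *v v' = h"
    by (rule eq_off[of k]) (auto simp: v'_def p_M h D_sol(3)[OF rp])
  thus ?thesis by blast
qed


definition Y :: "real \<Rightarrow> real^'n^'n" where "Y e = e *\<^sub>R mat 1 + M"

lemma Yv: "Y e *v x = e *\<^sub>R x + M *v x"
  by (simp add: Y_def matrix_vector_mult_add_rdistrib flip: matrix_scaleR_vector_ac)

lemma Y_sym: "inner (Y e *v x) y = inner x (Y e *v y)"
  by (simp add: Yv inner_add_left inner_add_right M_sym)

lemma Y_ker:
  assumes e: "e > 0" and "Y e *v x = 0"
  shows "x = 0"
proof -
  have "inner x (Y e *v x) = e * inner x x + inner x (M *v x)" by (simp add: Yv inner_add_right)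
  hence "e * inner x x + inner x (M *v x) = 0" using assms by simp
  moreover have "inner x x \<ge> 0" by simp
  ultimately have "e * inner x x = 0" using psd[of x] e by (smt (verit) mult_nonneg_nonneg)
  thus ?thesis using e by simp
qed

definition X :: "real \<Rightarrow> real^'n^'n" where "X e = matrix_inv (Y e)"

lemma Y_inv: "e > 0 \<Longrightarrow> invertible (Y e)"
  by (rule invertible_ker) (rule Y_ker)

lemma XYv:
  assumes "e > 0"
  shows "X e *v (Y e *v x) = x" "Y e *v (X e *v x) = x"
  using matrix_inv_props[OF Y_inv[OF assms]]
  by (simp_all add: X_def matrix_vector_mul_assoc)

lemma X_sym:
  assumes e: "e > 0"
  shows "inner x (X e *v y) = inner (X e *v x) y"
proof -
  have "inner x (X e *v y) = inner (Y e *v (X e *v x)) (X e *v y)" by (simp add: XYv[OF e])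
  also have "\<dots> = inner (X e *v x) (Y e *v (X e *v y))" by (rule Y_sym)
  also have "\<dots> = inner (X e *v x) y" by (simp add: XYv[OF e])
  finally show ?thesis .
qed

lemma X_bound:
  assumes e: "e > 0"
  shows "e * norm (X e *v y) \<le> norm y"
proof -
  define x where "x = X e *v y"
  have y: "y = Y e *v x" by (simp add: x_def XYv[OF e])
  have "e * (norm x)\<^sup>2 \<le> e * inner x x + inner x (M *v x)"
    using psd[of x] by (simp add: power2_norm_eq_inner)
  also have "\<dots> = inner x y" by (simp add: y Yv inner_add_right)
  also have "\<dots> \<le> norm x * norm y" by (rule Cauchy_Schwarz_ineq2[THEN order_trans[OF abs_ge_self]])
  finally have "e * norm x * norm x \<le> norm y * norm x" by (simp add: power2_eq_square mult_ac)
  hence "e * norm x \<le> norm y \<or> norm x = 0"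
    by (metis mult_right_le_imp_le norm_ge_zero order_le_less)
  thus ?thesis using e by (auto simp: x_def)
qed

lemma Xp:
  assumes e: "e > 0"
  shows "X e *v p = (1/e) *\<^sub>R p"
proof -
  have "Y e *v ((1/e) *\<^sub>R p) = p" using e by (simp add: Yv Mp matrix_vector_mult_scaleR)
  hence "X e *v p = X e *v (Y e *v ((1/e) *\<^sub>R p))" by simp
  thus ?thesis by (simp add: XYv[OF e])
qed

lemma Xh:
  assumes e: "e > 0" and z: "M *v z = h"
  shows "X e *v h = z - e *\<^sub>R (X e *v z)"
proof -
  have "e *\<^sub>R (X e *v z) + X e *v h = X e *v (Y e *v z)"
    by (simp add: Yv z matrix_vector_right_distrib matrix_vector_mult_scaleR)
  also have "\<dots> = z" by (simp add: XYv[OF e])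
  finally have zz: "e *\<^sub>R (X e *v z) + X e *v h = z" .
  have "X e *v h = (e *\<^sub>R (X e *v z) + X e *v h) - e *\<^sub>R (X e *v z)" by simp
  thus ?thesis by (simp only: zz)
qed

definition N :: real where "N = inner p p"

lemma N_pos: "N > 0"
proof -
  have "p \<noteq> 0" using p_pos by (metis less_irrefl zero_index)
  thus ?thesis by (simp add: N_def)
qed

definition hv :: "'n \<Rightarrow> real^'n" where "hv a = axis a 1 - (p $ a / N) *\<^sub>R p"

lemma p_hv: "inner p (hv a) = 0"
proof -
  have "inner p (axis a 1) = p $ a" by (simp add: inner_axis)
  thus ?thesis using N_pos by (simp add: hv_def inner_diff_right N_def[symmetric])
qed

lemma hv_p: "inner (hv a) p = 0"
  using p_hv[of a] by (metis inner_commute)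

lemma entry: "X e $ a $ b = inner (axis a 1) (X e *v axis b 1)"
  by (simp add: matrix_vector_mult_basis column_def inner_axis')

lemma expand:
  assumes e: "e > 0" and za: "M *v za = hv a" and zb: "M *v zb = hv b"
  shows "X e $ a $ b = p $ a * p $ b / (N * e) + inner (hv a) zb - e * inner za zb
           + e\<^sup>2 * inner (X e *v za) zb"
proof -
  have eb: "axis b 1 = (p $ b / N) *\<^sub>R p + hv b" by (simp add: hv_def)
  have ea: "axis a 1 = (p $ a / N) *\<^sub>R p + hv a" by (simp add: hv_def)
  have Xeb: "X e *v axis b 1 = (p $ b / (N * e)) *\<^sub>R p + X e *v hv b"
    by (subst eb) (simp add: matrix_vector_right_distrib matrix_vector_mult_scaleR Xp[OF e])
  have c1: "inner p (X e *v hv b) = 0"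
    using X_sym[OF e, of p "hv b"] Xp[OF e] p_hv[of b] by simp
  have c2: "inner (hv a) (X e *v zb) = inner za zb - e * inner (X e *v za) zb"
    using X_sym[OF e, of "hv a" zb] Xh[OF e za] by (simp add: inner_diff_left)
  have d: "inner (hv a) (X e *v hv b) = inner (hv a) zb - e * inner (hv a) (X e *v zb)"
    by (simp add: Xh[OF e zb] inner_diff_right)
  have c3: "inner (hv a) (X e *v hv b) = inner (hv a) zb - e * inner za zb + e\<^sup>2 * inner (X e *v za) zb"
    by (simp only: d c2) (simp add: algebra_simps power2_eq_square)
  have "X e $ a $ b = inner ((p $ a / N) *\<^sub>R p + hv a) ((p $ b / (N * e)) *\<^sub>R p + X e *v hv b)"
    by (simp add: entry Xeb flip: ea)
  also have "\<dots> = (p $ a / N) * (p $ b / (N * e)) * N + (p $ b / (N * e)) * inner (hv a) p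
       + (p $ a / N) * inner p (X e *v hv b) + inner (hv a) (X e *v hv b)"
    by (simp add: inner_add_left inner_add_right N_def algebra_simps)
  also have "\<dots> = p $ a * p $ b / (N * e) + inner (hv a) (X e *v hv b)"
    using N_pos c1 hv_p[of a] by (simp add: field_simps)
  finally show ?thesis using c3 by simp
qed

lemma expand_bound:
  assumes e: "e > 0" and za: "M *v za = hv a" and zb: "M *v zb = hv b"
  shows "\<bar>e * X e $ a $ b - p $ a * p $ b / N - e * inner (hv a) zb\<bar> \<le> (2 * norm za * norm zb) * e\<^sup>2"
proof -
  define r where "r = - inner za zb + e * inner (X e *v za) zb"
  have eq: "e * X e $ a $ b - p $ a * p $ b / N - e * inner (hv a) zb = e\<^sup>2 * r"
    using e N_pos unfolding r_def expand[OF e za zb] by (simp add: field_simps power2_eq_square)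
  have "\<bar>inner za zb\<bar> \<le> norm za * norm zb" by (rule Cauchy_Schwarz_ineq2)
  moreover have "\<bar>e * inner (X e *v za) zb\<bar> \<le> norm za * norm zb"
  proof -
    have "\<bar>e * inner (X e *v za) zb\<bar> \<le> e * (norm (X e *v za) * norm zb)"
      using e Cauchy_Schwarz_ineq2[of "X e *v za" zb] by (simp add: abs_mult)
    also have "\<dots> = (e * norm (X e *v za)) * norm zb" by simp
    also have "\<dots> \<le> norm za * norm zb"
      using X_bound[OF e, of za] by (intro mult_right_mono) auto
    finally show ?thesis .
  qed
  ultimately have rb: "\<bar>r\<bar> \<le> 2 * norm za * norm zb" unfolding r_def by linarith
  have "\<bar>e\<^sup>2 * r\<bar> = e\<^sup>2 * \<bar>r\<bar>" by (simp add: abs_mult)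
  also have "\<dots> \<le> e\<^sup>2 * (2 * norm za * norm zb)" using rb by (intro mult_left_mono) auto
  finally show ?thesis unfolding eq by (simp only: mult.commute)
qed


lemma Pv: "(diag_mat p *v x) $ a = p $ a * x $ a"
proof -
  have "(diag_mat p *v x) $ a = (\<Sum>b\<in>UNIV. (if a = b then p $ a else 0) * x $ b)"
    by (simp add: diag_mat_def matrix_vector_mult_def)
  also have "\<dots> = (\<Sum>b\<in>UNIV. if b = a then p $ a * x $ b else 0)" by (rule sum.cong) auto
  also have "\<dots> = p $ a * x $ a" by simp
  finally show ?thesis .
qed

lemma D_cut:
  assumes "a \<noteq> k"
  shows "(M *v (\<chi> b. if b = k then 0 else v $ b)) $ a = (D k *v v) $ a"
proof -
  have "(D k *v (\<chi> b. if b = k then 0 else v $ b)) $ a = (D k *v v) $ a"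
    unfolding Dv by (intro arg_cong2[where f="(-)"] sum.cong) (use assms in auto)
  thus ?thesis using D_M[OF assms, of "\<chi> b. if b = k then 0 else v $ b"] by simp
qed

lemma one_sol:
  assumes psum: "(\<Sum>a\<in>UNIV. p $ a) = 1" and DV: "D k *v v = (\<chi> a. 1)"
  shows "M *v (\<chi> b. if b = k then 0 else v $ b) = (\<chi> a. 1) - (1 / p $ k) *\<^sub>R axis k 1"
proof (rule eq_off[of k])
  fix a assume a: "a \<noteq> k"
  show "(M *v (\<chi> b. if b = k then 0 else v $ b)) $ a = ((\<chi> a. 1) - (1 / p $ k) *\<^sub>R axis k 1) $ a"
    using a by (simp add: D_cut DV axis_def)
next
  have i1: "inner p (\<chi> a. (1::real)) = (\<Sum>a\<in>UNIV. p $ a)" by (simp add: inner_vec_def)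
  have i2: "inner p ((1 / p $ k) *\<^sub>R axis k 1) = 1" using p_pos[of k] by (simp add: inner_axis)
  have "inner p ((\<chi> a. 1) - (1 / p $ k) *\<^sub>R axis k 1) = 0"
    by (simp only: inner_diff_right i1 i2 psum diff_self)
  thus "inner p (M *v (\<chi> b. if b = k then 0 else v $ b)) = inner p ((\<chi> a. 1) - (1 / p $ k) *\<^sub>R axis k 1)"
    by (simp add: p_M)
qed

lemma rowsum:
  fixes k :: 'n
  assumes rp: "\<rho> > 0"
  defines "V \<equiv> matrix_inv (D k ** diag_mat p)"
  defines "v \<equiv> diag_mat p *v (V *v (\<chi> a. 1))"
  shows "D k *v v = (\<chi> a. 1)" "(\<Sum>l\<in>UNIV. V $ a $ l) = v $ a / p $ a"
proof -
  have inv: "invertible (D k ** diag_mat p)"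
  proof (rule invertible_ker)
    fix x assume "(D k ** diag_mat p) *v x = 0"
    hence "D k *v (diag_mat p *v x) = 0" by (simp add: matrix_vector_mul_assoc)
    hence "diag_mat p *v x = 0" by (rule D_ker[OF rp])
    hence px: "p $ a * x $ a = 0" for a by (metis Pv zero_index)
    have "x $ a = 0" for a using px[of a] p_pos[of a] by auto
    thus "x = 0" by (simp add: vec_eq_iff)
  qed
  have "D k *v v = ((D k ** diag_mat p) ** V) *v (\<chi> a. 1)"
    unfolding v_def by (simp add: matrix_vector_mul_assoc matrix_mul_assoc)
  thus "D k *v v = (\<chi> a. 1)" unfolding V_def by (simp add: matrix_inv_props(1)[OF inv])
  have "(\<Sum>l\<in>UNIV. V $ a $ l) = (V *v (\<chi> a. 1)) $ a" by (simp add: matrix_vector_mult_def)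
  thus "(\<Sum>l\<in>UNIV. V $ a $ l) = v $ a / p $ a" using p_pos[of a] by (simp add: v_def Pv)
qed

lemma ident:
  assumes rp: "\<rho> > 0" and psum: "(\<Sum>a\<in>UNIV. p $ a) = 1" and ij: "i \<noteq> j"
    and zi: "M *v zi = hv i" and zj: "M *v zj = hv j"
  shows "(\<Sum>l\<in>UNIV. matrix_inv (D j ** diag_mat p) $ i $ l) + (\<Sum>l\<in>UNIV. matrix_inv (D i ** diag_mat p) $ j $ l)
    = inner (hv i) zi / (p $ i * p $ i) + inner (hv j) zj / (p $ j * p $ j) - 2 * inner (hv i) zj / (p $ i * p $ j)"
proof -
  define v where "v = diag_mat p *v (matrix_inv (D j ** diag_mat p) *v (\<chi> a. 1))"
  define u where "u = diag_mat p *v (matrix_inv (D i ** diag_mat p) *v (\<chi> a. 1))"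
  define v' where "v' = (\<chi> b. if b = j then 0 else v $ b)"
  define u' where "u' = (\<chi> b. if b = i then 0 else u $ b)"
  have Mv': "M *v v' = (\<chi> a. 1) - (1 / p $ j) *\<^sub>R axis j 1"
    unfolding v'_def by (rule one_sol[OF psum]) (simp add: v_def rowsum(1)[OF rp])
  have Mu': "M *v u' = (\<chi> a. 1) - (1 / p $ i) *\<^sub>R axis i 1"
    unfolding u'_def by (rule one_sol[OF psum]) (simp add: u_def rowsum(1)[OF rp])
  define w where "w = (1 / p $ i) *\<^sub>R axis i 1 - (1 / p $ j) *\<^sub>R axis j (1::real)"
  define \<xi> where "\<xi> = v' - u'"
  define \<zeta> where "\<zeta> = (1 / p $ i) *\<^sub>R zi - (1 / p $ j) *\<^sub>R zj"
  have Mxi: "M *v \<xi> = w" by (simp add: \<xi>_def w_def matrix_vector_mult_diff_distrib Mv' Mu')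
  have w_hv: "w = (1 / p $ i) *\<^sub>R hv i - (1 / p $ j) *\<^sub>R hv j"
    using p_pos[of i] p_pos[of j] by (simp add: w_def hv_def vec_eq_iff field_simps)
  have Mzeta: "M *v \<zeta> = w"
    by (simp add: \<zeta>_def w_hv matrix_vector_mult_diff_distrib matrix_vector_mult_scaleR zi zj)
  have "inner w \<zeta> - inner w \<xi> = inner (M *v \<xi>) (\<zeta> - \<xi>)" by (simp add: Mxi inner_diff_right)
  also have "\<dots> = inner \<xi> (M *v (\<zeta> - \<xi>))" by (rule M_sym)
  also have "\<dots> = 0" by (simp add: matrix_vector_mult_diff_distrib Mzeta Mxi)
  finally have wz: "inner w \<zeta> = inner w \<xi>" by simp
  have "inner w \<xi> = \<xi> $ i / p $ i - \<xi> $ j / p $ j" by (simp add: w_def inner_diff_left inner_axis')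
  also have "\<dots> = v $ i / p $ i + u $ j / p $ j" using ij by (simp add: \<xi>_def v'_def u'_def)
  also have "\<dots> = (\<Sum>l\<in>UNIV. matrix_inv (D j ** diag_mat p) $ i $ l) + (\<Sum>l\<in>UNIV. matrix_inv (D i ** diag_mat p) $ j $ l)"
    by (simp add: v_def u_def rowsum(2)[OF rp])
  finally have T: "inner w \<zeta> = (\<Sum>l\<in>UNIV. matrix_inv (D j ** diag_mat p) $ i $ l) + (\<Sum>l\<in>UNIV. matrix_inv (D i ** diag_mat p) $ j $ l)"
    using wz by simp
  have Kji: "inner (hv j) zi = inner (hv i) zj"
  proof -
    have "inner (hv j) zi = inner (M *v zj) zi" by (simp add: zj)
    also have "\<dots> = inner zj (M *v zi)" by (rule M_sym)
    also have "\<dots> = inner (hv i) zj" by (simp add: zi inner_commute)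
    finally show ?thesis .
  qed
  have "inner w \<zeta> = (1 / p $ i) * (1 / p $ i) * inner (hv i) zi - (1 / p $ i) * (1 / p $ j) * inner (hv i) zj
     - (1 / p $ j) * (1 / p $ i) * inner (hv j) zi + (1 / p $ j) * (1 / p $ j) * inner (hv j) zj"
    unfolding w_hv \<zeta>_def by (simp add: inner_diff_left inner_diff_right algebra_simps)
  also have "\<dots> = inner (hv i) zi / (p $ i * p $ i) + inner (hv j) zj / (p $ j * p $ j) - 2 * inner (hv i) zj / (p $ i * p $ j)"
    unfolding Kji using p_pos[of i] p_pos[of j] by (simp add: field_simps)
  finally have "inner w \<zeta> = inner (hv i) zi / (p $ i * p $ i) + inner (hv j) zj / (p $ j * p $ j) - 2 * inner (hv i) zj / (p $ i * p $ j)" .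
  thus ?thesis using T by simp
qed

lemma resolvent:
  assumes rp: "\<rho> > 0" and e: "e > 0"
  shows "matrix_inv (mat 1 - inverse (\<rho> + e) *\<^sub>R A) = (\<rho> + e) *\<^sub>R X e"
proof -
  define s where "s = \<rho> + e"
  have s: "s > 0" using rp e by (simp add: s_def)
  have "Y e = s *\<^sub>R mat 1 - A" by (simp add: Y_def M_def s_def scaleR_add_left algebra_simps)
  hence "inverse s *\<^sub>R Y e = (inverse s * s) *\<^sub>R mat 1 - inverse s *\<^sub>R A" by (simp add: scaleR_diff_right)
  hence YY: "mat 1 - inverse s *\<^sub>R A = inverse s *\<^sub>R Y e" using s by simp
  have "(inverse s *\<^sub>R Y e) ** (s *\<^sub>R X e) = mat 1"
    using s matrix_inv_props(1)[OF Y_inv[OF e]]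
    by (simp add: X_def matrix_scalar_ac flip: scalar_matrix_assoc)
  moreover have "(s *\<^sub>R X e) ** (inverse s *\<^sub>R Y e) = mat 1"
    using s matrix_inv_props(2)[OF Y_inv[OF e]]
    by (simp add: X_def matrix_scalar_ac flip: scalar_matrix_assoc)
  ultimately show ?thesis unfolding YY s_def[symmetric] by (rule matrix_inv_eqI)
qed


lemma main:
  assumes ij: "i \<noteq> j" and psum: "(\<Sum>a\<in>UNIV. p $ a) = 1"
  shows "((\<lambda>\<alpha>. lw_theta CARD('n) \<alpha> *
      ((ln (matrix_inv (mat 1 - inverse (\<rho> + inverse \<alpha>) *\<^sub>R A) $ i $ i)
        + ln (matrix_inv (mat 1 - inverse (\<rho> + inverse \<alpha>) *\<^sub>R A) $ j $ j)) / 2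
       - ln (matrix_inv (mat 1 - inverse (\<rho> + inverse \<alpha>) *\<^sub>R A) $ i $ j)))
    \<longlongrightarrow> N / real CARD('n) * ((\<Sum>l\<in>UNIV. matrix_inv (D j ** diag_mat p) $ i $ l)
        + (\<Sum>l\<in>UNIV. matrix_inv (D i ** diag_mat p) $ j $ l))) at_top"
proof -
  have rp: "\<rho> > 0" by (rule rho_pos[OF ij])
  obtain zi where zi: "M *v zi = hv i" using range_M[OF rp p_hv] by blast
  obtain zj where zj: "M *v zj = hv j" using range_M[OF rp p_hv] by blast
  define Q where "Q = (\<lambda>a b e. e * X e $ a $ b)"
  define c where "c = (\<lambda>a b. p $ a * p $ b / N)"
  have cpos: "c a b > 0" for a b using N_pos p_pos[of a] p_pos[of b] by (simp add: c_def)
  have bnd: "\<And>e. e > 0 \<Longrightarrow> \<bar>Q a b e - c a b - e * inner (hv a) zb\<bar> \<le> (2 * norm za * norm zb) * e\<^sup>2"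
    if "M *v za = hv a" "M *v zb = hv b" for a b za zb
    using expand_bound[OF _ that] by (simp add: Q_def c_def)
  note le_ii = log_expansion[OF cpos[of i i] bnd[OF zi zi]]
  note le_jj = log_expansion[OF cpos[of j j] bnd[OF zj zj]]
  note le_ij = log_expansion[OF cpos[of i j] bnd[OF zi zj]]
  define E where "E = (\<lambda>e. (ln (Q i i e) + ln (Q j j e)) / 2 - ln (Q i j e))"
  define Lim where "Lim = (inner (hv i) zi / c i i + inner (hv j) zj / c j j) / 2 - inner (hv i) zj / c i j"
  have two2: "(2::real) \<noteq> 0" by simp
  have lnc: "(ln (c i i) + ln (c j j)) / 2 - ln (c i j) = 0"
    using N_pos p_pos[of i] p_pos[of j] by (simp add: c_def ln_div ln_mult)
  have Eq: "E e / e = ((ln (Q i i e) - ln (c i i)) / e + (ln (Q j j e) - ln (c j j)) / e) / 2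
      - (ln (Q i j e) - ln (c i j)) / e" for e
  proof (cases "e = 0")
    case True thus ?thesis by simp
  next
    case False
    have Ee: "E e = ((ln (Q i i e) - ln (c i i)) + (ln (Q j j e) - ln (c j j))) / 2 - (ln (Q i j e) - ln (c i j))"
      using lnc unfolding E_def
      by (simp only: diff_divide_distrib add_divide_distrib)
    show ?thesis unfolding Ee using False by (simp add: field_simps)
  qed
  have "((\<lambda>e. ((ln (Q i i e) - ln (c i i)) / e + (ln (Q j j e) - ln (c j j)) / e) / 2
      - (ln (Q i j e) - ln (c i j)) / e) \<longlongrightarrow> Lim) (at_right 0)"
    unfolding Lim_def
    by (rule tendsto_diff[OF tendsto_divide[OF tendsto_add[OF le_ii(1) le_jj(1)] tendsto_const[of "2::real"] two2] le_ij(1)])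
  hence limE: "((\<lambda>e. E e / e) \<longlongrightarrow> Lim) (at_right 0)" by (simp only: Eq)
  have limA: "((\<lambda>\<alpha>. E (inverse \<alpha>) / inverse \<alpha>) \<longlongrightarrow> Lim) at_top"
    unfolding filterlim_at_top_to_right by (simp add: limE)
  have theta: "((\<lambda>\<alpha>. lw_theta CARD('n) \<alpha> / \<alpha>) \<longlongrightarrow> 2 / real CARD('n)) at_top"
    by (rule theta_lim) simp
  have prod: "((\<lambda>\<alpha>. lw_theta CARD('n) \<alpha> / \<alpha> * (E (inverse \<alpha>) / inverse \<alpha>)) \<longlongrightarrow> 2 / real CARD('n) * Lim) at_top"
    by (rule tendsto_mult[OF theta limA])
  have ev0: "eventually (\<lambda>e. Q i i e > 0 \<and> Q j j e > 0 \<and> Q i j e > 0) (at_right 0)"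
    using le_ii(2) le_jj(2) le_ij(2) by (intro eventually_conj)
  have ev1: "eventually (\<lambda>\<alpha>. Q i i (inverse \<alpha>) > 0 \<and> Q j j (inverse \<alpha>) > 0 \<and> Q i j (inverse \<alpha>) > 0) at_top"
    using filterlim_iff[THEN iffD1, OF filterlim_inverse_at_right_top, rule_format, OF ev0] by simp
  have ev: "eventually (\<lambda>\<alpha>. \<alpha> > 0 \<and> Q i i (inverse \<alpha>) > 0 \<and> Q j j (inverse \<alpha>) > 0 \<and> Q i j (inverse \<alpha>) > 0) at_top"
    using eventually_conj[OF eventually_gt_at_top[of 0] ev1] by simp
  have pw: "lw_theta CARD('n) \<alpha> / \<alpha> * (E (inverse \<alpha>) / inverse \<alpha>) = lw_theta CARD('n) \<alpha> *
      ((ln (matrix_inv (mat 1 - inverse (\<rho> + inverse \<alpha>) *\<^sub>R A) $ i $ i)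
        + ln (matrix_inv (mat 1 - inverse (\<rho> + inverse \<alpha>) *\<^sub>R A) $ j $ j)) / 2
       - ln (matrix_inv (mat 1 - inverse (\<rho> + inverse \<alpha>) *\<^sub>R A) $ i $ j))"
    if "\<alpha> > 0 \<and> Q i i (inverse \<alpha>) > 0 \<and> Q j j (inverse \<alpha>) > 0 \<and> Q i j (inverse \<alpha>) > 0" for \<alpha>
  proof -
    define e where "e = inverse \<alpha>"
    have e: "e > 0" using that by (simp add: e_def)
    have Qp: "Q i i e > 0" "Q j j e > 0" "Q i j e > 0" using that by (simp_all add: e_def)
    have se: "(\<rho> + e) / e > 0" using e rp by simp
    have R: "matrix_inv (mat 1 - inverse (\<rho> + e) *\<^sub>R A) $ a $ b = ((\<rho> + e) / e) * Q a b e" for a b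
      using e by (simp add: resolvent[OF rp e] Q_def)
    have lnR: "ln (matrix_inv (mat 1 - inverse (\<rho> + e) *\<^sub>R A) $ a $ b) = ln ((\<rho> + e) / e) + ln (Q a b e)"
      if "Q a b e > 0" for a b
      unfolding R by (rule ln_mult_pos[OF se that])
    have "(ln (matrix_inv (mat 1 - inverse (\<rho> + e) *\<^sub>R A) $ i $ i)
        + ln (matrix_inv (mat 1 - inverse (\<rho> + e) *\<^sub>R A) $ j $ j)) / 2
       - ln (matrix_inv (mat 1 - inverse (\<rho> + e) *\<^sub>R A) $ i $ j) = E e"
      unfolding lnR[OF Qp(1)] lnR[OF Qp(2)] lnR[OF Qp(3)] E_def by (simp add: field_simps)
    moreover have "lw_theta CARD('n) \<alpha> / \<alpha> * (E e / e) = lw_theta CARD('n) \<alpha> * E e"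
      using that by (simp add: e_def)
    ultimately show ?thesis by (simp add: e_def)
  qed
  have lim2: "((\<lambda>\<alpha>. lw_theta CARD('n) \<alpha> *
      ((ln (matrix_inv (mat 1 - inverse (\<rho> + inverse \<alpha>) *\<^sub>R A) $ i $ i)
        + ln (matrix_inv (mat 1 - inverse (\<rho> + inverse \<alpha>) *\<^sub>R A) $ j $ j)) / 2
       - ln (matrix_inv (mat 1 - inverse (\<rho> + inverse \<alpha>) *\<^sub>R A) $ i $ j)))
    \<longlongrightarrow> 2 / real CARD('n) * Lim) at_top"
    using prod by (rule Lim_transform_eventually[OF _ eventually_mono[OF ev pw]])
  have val: "2 / real CARD('n) * Lim = N / real CARD('n) * ((\<Sum>l\<in>UNIV. matrix_inv (D j ** diag_mat p) $ i $ l)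
        + (\<Sum>l\<in>UNIV. matrix_inv (D i ** diag_mat p) $ j $ l))"
    unfolding ident[OF rp psum ij zi zj] Lim_def c_def
    using N_pos p_pos[of i] p_pos[of j] by (simp add: field_simps)
  show ?thesis using lim2 unfolding val .
qed

end
theorem corollary9:
  fixes A :: "real^'n^'n" and p :: "real^'n" and i j :: 'n
  assumes n2: "CARD('n) \<ge> 2"
    and sym: "transpose A = A"
    and nonneg: "\<forall>a b. A $ a $ b \<ge> 0"
    and conn: "adj_connected A"
    and p_pos: "\<forall>a. p $ a > 0"
    and p_sum: "(\<Sum>a\<in>UNIV. p $ a) = 1"
    and p_eig: "A *v p = spec_radius A *\<^sub>R p"
    and ij: "i \<noteq> j"
  shows "(lw_expr A i j \<longlongrightarrow>
           (norm p)\<^sup>2 / real CARD('n) *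
             ((\<Sum>k\<in>UNIV. matrix_inv ((spec_radius A *\<^sub>R mat 1 - del_rc A j) ** diag_mat p) $ i $ k)
            + (\<Sum>k\<in>UNIV. matrix_inv ((spec_radius A *\<^sub>R mat 1 - del_rc A i) ** diag_mat p) $ j $ k)))
         at_top"
proof -
  have symm: "A $ a $ b = A $ b $ a" for a b
  proof -
    have "transpose A $ a $ b = A $ b $ a" by (simp add: transpose_def)
    thus ?thesis using sym by simp
  qed
  interpret lw A p "spec_radius A"
    by unfold_locales (use symm nonneg conn p_pos p_eig in auto)
  have L: "((\<lambda>\<alpha>. lw_theta CARD('n) \<alpha> *
      ((ln (matrix_inv (mat 1 - inverse (spec_radius A + inverse \<alpha>) *\<^sub>R A) $ i $ i)
        + ln (matrix_inv (mat 1 - inverse (spec_radius A + inverse \<alpha>) *\<^sub>R A) $ j $ j)) / 2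
       - ln (matrix_inv (mat 1 - inverse (spec_radius A + inverse \<alpha>) *\<^sub>R A) $ i $ j)))
    \<longlongrightarrow> N / real CARD('n) * ((\<Sum>l\<in>UNIV. matrix_inv (D j ** diag_mat p) $ i $ l)
        + (\<Sum>l\<in>UNIV. matrix_inv (D i ** diag_mat p) $ j $ l))) at_top"
    by (rule main[OF ij p_sum])
  have e1: "lw_expr A i j = (\<lambda>\<alpha>. lw_theta CARD('n) \<alpha> *
      ((ln (matrix_inv (mat 1 - inverse (spec_radius A + inverse \<alpha>) *\<^sub>R A) $ i $ i)
        + ln (matrix_inv (mat 1 - inverse (spec_radius A + inverse \<alpha>) *\<^sub>R A) $ j $ j)) / 2
       - ln (matrix_inv (mat 1 - inverse (spec_radius A + inverse \<alpha>) *\<^sub>R A) $ i $ j)))"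
    by (rule ext) (simp add: lw_expr_def lw_resolvent_def Let_def)
  have e2: "N = (norm p)\<^sup>2" by (simp add: N_def power2_norm_eq_inner)
  show ?thesis using L unfolding e1 D_def e2 .
qed

end
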